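(* For every positive integer $n$, the set $\{S_\alpha : \alpha \models n\}$ of shuffle functions is a basis of the vector space $\mathrm{QSym}_n$.
   Context: A composition $\alpha=(\alpha_1,\dots,\alpha_\ell)$ of $n$ (written $\alpha\models n$) is a finite sequence of positive integers summing to $n$; $\ell(\alpha)=\ell$ is its length. Set $\mathcal{I}(\alpha)=\{\alpha_1,\alpha_1+\alpha_2,\dots,\alpha_1+\cdots+\alpha_{\ell-1}\}\subseteq[n-1]$. For $\alpha,\beta\models n$ write $\beta\le\alpha$ if $\mathcal{I}(\beta)\subseteq\mathcal{I}(\alpha)$ (i.e. $\alpha$ refines $\beta$). The monomial quasisymmetric function is $M_\alpha=\sum_{i_1<\cdots<i_\ell}x_{i_1}^{\alpha_1}\cdots x_{i_\ell}^{\alpha_\ell}$ (in commuting variables $x_1,x_2,\dots$), and $\mathrm{QSym}_n$ is the $\mathbb{C}$-span of $\{M_\alpha:\alpha\models n\}$. For a composition $\alpha=(\alpha_1,\dots,\alpha_\ell)$ let $\mathrm{OtE}(\alpha)=\{i:\alpha_i\text{ odd},\ \alpha_{i+1}\text{ even}\}$. If $\mathrm{OtE}(\alpha)=\{i_1<\cdots<i_k\}$, the odd-min composition is $m_o(\alpha)=(\alpha_1+\cdots+\alpha_{i_1},\ \alpha_{i_1+1}+\cdots+\alpha_{i_2},\ \dots,\ \alpha_{i_k+1}+\cdots+\alpha_\ell)$. For $\beta=(\beta_1,\dots,\beta_p)$ with $m_o(\alpha)\le\beta\le\alpha$, each $\beta_i$ is the sum of a block of consecutive parts of $\alpha$; let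 $\mathrm{O}^\beta_\alpha(i)$ and $\mathrm{E}^\beta_\alpha(i)$ be the numbers of odd and even parts in that block, and set $c_\alpha^\beta=\prod_i \frac{1}{\mathrm{O}^\beta_\alpha(i)!\,\mathrm{E}^\beta_\alpha(i)!}$. The shuffle function is $S_\alpha=\sum_{m_o(\alpha)\le\beta\le\alpha} c_\alpha^\beta M_\beta$. *)

theory Defs
  imports Complex_Main "HOL-Library.Function_Algebras"
begin

text \<open>Monomials in commuting variables x_0, x_1, ... are exponent vectors
  nat => nat (only finitely supported ones are genuine monomials).\<close>

type_synonym monom = "nat \<Rightarrow> nat"
type_synonym fps_inf = "monom \<Rightarrow> complex"

definition scaleF :: "complex \<Rightarrow> fps_inf \<Rightarrow> fps_inf" where
  "scaleF c f = (\<lambda>m. c * f m)"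

definition is_comp :: "nat \<Rightarrow> nat list \<Rightarrow> bool" where
  "is_comp n \<alpha> \<longleftrightarrow> (\<forall>a\<in>set \<alpha>. 0 < a) \<and> sum_list \<alpha> = n"

definition comps :: "nat \<Rightarrow> nat list set" where
  "comps n = {\<alpha>. is_comp n \<alpha>}"

definition Iset :: "nat list \<Rightarrow> nat set" where
  "Iset \<alpha> = {sum_list (take k \<alpha>) | k. 0 < k \<and> k < length \<alpha>}"

definition comp_le :: "nat list \<Rightarrow> nat list \<Rightarrow> bool" where
  "comp_le \<beta> \<alpha> \<longleftrightarrow> Iset \<beta> \<subseteq> Iset \<alpha>"

definition exps :: "monom \<Rightarrow> nat list" where
  "exps m = map m (sorted_list_of_set {i. m i \<noteq> 0})"

definition Mqs :: "nat list \<Rightarrow> fps_inf" where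
  "Mqs \<alpha> = (\<lambda>m. if finite {i. m i \<noteq> 0} \<and> exps m = \<alpha> then 1 else 0)"

definition QSym :: "nat \<Rightarrow> fps_inf set" where
  "QSym n = module.span scaleF (Mqs ` comps n)"

definition comp_of_set :: "nat \<Rightarrow> nat set \<Rightarrow> nat list" where
  "comp_of_set n D = (let L = sorted_list_of_set (insert 0 (insert n D))
                      in map2 (\<lambda>a b. b - a) L (tl L))"

text \<open>OtE(alpha), 0-indexed: positions i (part alpha!i odd, alpha!(i+1) even).\<close>
definition OtE :: "nat list \<Rightarrow> nat set" where
  "OtE \<alpha> = {i. Suc i < length \<alpha> \<and> odd (\<alpha> ! i) \<and> even (\<alpha> ! Suc i)}"

definition odd_min :: "nat list \<Rightarrow> nat list" where
  "odd_min \<alpha> = comp_of_set (sum_list \<alpha>) ((\<lambda>i. sum_list (take (Suc i) \<alpha>)) ` OtE \<alpha>)"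

definition block :: "nat list \<Rightarrow> nat list \<Rightarrow> nat \<Rightarrow> nat set" where
  "block \<alpha> \<beta> j = {k. k < length \<alpha> \<and> sum_list (take j \<beta>) < sum_list (take (Suc k) \<alpha>)
                      \<and> sum_list (take (Suc k) \<alpha>) \<le> sum_list (take (Suc j) \<beta>)}"

definition Ocount :: "nat list \<Rightarrow> nat list \<Rightarrow> nat \<Rightarrow> nat" where
  "Ocount \<alpha> \<beta> j = card {k \<in> block \<alpha> \<beta> j. odd (\<alpha> ! k)}"

definition Ecount :: "nat list \<Rightarrow> nat list \<Rightarrow> nat \<Rightarrow> nat" where
  "Ecount \<alpha> \<beta> j = card {k \<in> block \<alpha> \<beta> j. even (\<alpha> ! k)}"

definition coef :: "nat list \<Rightarrow> nat list \<Rightarrow> complex" where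
  "coef \<alpha> \<beta> = (\<Prod>j<length \<beta>. 1 / (of_nat (fact (Ocount \<alpha> \<beta> j)) * of_nat (fact (Ecount \<alpha> \<beta> j))))"

definition Sshuf :: "nat list \<Rightarrow> fps_inf" where
  "Sshuf \<alpha> = (\<lambda>m. \<Sum>\<beta>\<in>{\<beta>. is_comp (sum_list \<alpha>) \<beta> \<and> comp_le (odd_min \<alpha>) \<beta> \<and> comp_le \<beta> \<alpha>}.
                    coef \<alpha> \<beta> * Mqs \<beta> m)"

end

theory Submission
  imports Defs
begin


lemma sum_fun_apply: "(\<Sum>x\<in>A. f x) y = (\<Sum>x\<in>A. (f x) y)" for f :: "'a \<Rightarrow> 'b \<Rightarrow> 'c::comm_monoid_add"
  by (induction A rule: infinite_finite_induct) auto

interpretation F: module scaleF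
  by unfold_locales (auto simp: scaleF_def fun_eq_iff algebra_simps)

lemma sum_list_ge_length: "\<forall>a\<in>set xs. 0 < (a::nat) \<Longrightarrow> length xs \<le> sum_list xs"
  by (induction xs) auto

lemma finite_comps: "finite (comps n)"
proof -
  have "comps n \<subseteq> {xs. set xs \<subseteq> {..n} \<and> length xs \<le> n}"
    using sum_list_ge_length member_le_sum_list
    by (fastforce simp: comps_def is_comp_def)
  thus ?thesis by (rule finite_subset) (rule finite_lists_length_le, simp)
qed

lemma Iset_Cons: "Iset (a # xs) = (if xs = [] then {} else insert a ((+) a ` Iset xs))"
proof (cases "xs = []")
  case True thus ?thesis by (simp add: Iset_def)
next
  case False
  have "Iset (a # xs) = {sum_list (take k (a#xs)) | k. 0 < k \<and> k < Suc (length xs)}" by (simp add: Iset_def)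
  also have "\<dots> = insert a ((+) a ` Iset xs)"
  proof (rule set_eqI, rule iffI)
    fix x assume "x \<in> {sum_list (take k (a#xs)) | k. 0 < k \<and> k < Suc (length xs)}"
    then obtain k where k: "x = sum_list (take k (a#xs))" "0<k" "k < Suc (length xs)" by blast
    then obtain j where "k = Suc j" by (cases k) auto
    with k show "x \<in> insert a ((+) a ` Iset xs)" by (cases j) (auto simp: Iset_def)
  next
    fix x assume "x \<in> insert a ((+) a ` Iset xs)"
    then consider "x = a" | j where "x = a + sum_list (take j xs)" "0<j" "j<length xs"
      by (auto simp: Iset_def)
    thus "x \<in> {sum_list (take k (a#xs)) | k. 0 < k \<and> k < Suc (length xs)}"
    proof cases
      case 1 thus ?thesis using False by (auto intro!: exI[of _ 1])
    next
      case 2 thus ?thesis by (auto intro!: exI[of _ "Suc j"])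
    qed
  qed
  finally show ?thesis using False by simp
qed

lemma Iset_Nil[simp]: "Iset [] = {}" by (simp add: Iset_def)

lemma Iset_pos: "\<forall>a\<in>set xs. 0 < (a::nat) \<Longrightarrow> x \<in> Iset xs \<Longrightarrow> 0 < x"
  by (induction xs arbitrary: x) (auto simp: Iset_Cons split: if_splits)

lemma Iset_inj: "is_comp n xs \<Longrightarrow> is_comp n ys \<Longrightarrow> Iset xs = Iset ys \<Longrightarrow> xs = ys"
proof (induction xs arbitrary: n ys)
  case Nil
  then show ?case by (cases ys) (auto simp: is_comp_def Iset_Cons split: if_splits)
next
  case (Cons a xs)
  show ?case
  proof (cases ys)
    case Nil
    then show ?thesis using Cons.prems by (auto simp: is_comp_def Iset_Cons split: if_splits)
  next
    case (Cons b ys')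
    note ys = this
    show ?thesis
    proof (cases "xs = []")
      case True
      then show ?thesis using Cons.prems ys by (auto simp: is_comp_def Iset_Cons split: if_splits)
    next
      case False
      with Cons.prems ys have ys': "ys' \<noteq> []" by (auto simp: Iset_Cons split: if_splits)
      have px: "\<forall>x\<in>set xs. 0 < x" and py: "\<forall>x\<in>set ys'. 0 < x" and pa: "0<a" and pb: "0<b"
        using Cons.prems ys by (auto simp: is_comp_def)
      have IA: "Iset (a#xs) = insert a ((+) a ` Iset xs)" using False by (simp add: Iset_Cons)
      have IB: "Iset (b#ys') = insert b ((+) b ` Iset ys')" using ys' by (simp add: Iset_Cons)
      have ma: "Min (Iset (a#xs)) = a"
        unfolding IA using Iset_pos[OF px] 
        by (intro Min_eqI) (auto simp: Iset_def)
      have mb: "Min (Iset (b#ys')) = b"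
        unfolding IB using Iset_pos[OF py] 
        by (intro Min_eqI) (auto simp: Iset_def)
      have ab: "a = b" using ma mb Cons.prems ys by simp
      have "insert a ((+) a ` Iset xs) = insert a ((+) a ` Iset ys')" using IA IB ab Cons.prems ys by simp
      moreover have "a \<notin> (+) a ` Iset xs" "a \<notin> (+) a ` Iset ys'" using Iset_pos[OF px] Iset_pos[OF py] by force+
      ultimately have "(+) a ` Iset xs = (+) a ` Iset ys'"
        by (metis insert_ident)
      hence "Iset xs = Iset ys'" by (simp add: inj_image_eq_iff)
      moreover have "is_comp (n - a) xs" "is_comp (n - a) ys'" using Cons.prems ys ab by (auto simp: is_comp_def)
      ultimately have "xs = ys'" using Cons.IH by blast
      then show ?thesis using ys ab by simp
    qed
  qed
qed




definition mon :: "nat list \<Rightarrow> monom" where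
  "mon xs = (\<lambda>i. if i < length xs then xs ! i else 0)"

lemma Mqs_mon: assumes "\<forall>a\<in>set ys. 0 < a" shows "Mqs xs (mon ys) = (if xs = ys then 1 else 0)"
proof -
  have s: "{i. mon ys i \<noteq> 0} = {0..<length ys}"
  proof (rule set_eqI)
    fix i show "i \<in> {i. mon ys i \<noteq> 0} \<longleftrightarrow> i \<in> {0..<length ys}"
      using assms nth_mem[of i ys] by (auto simp: mon_def)
  qed
  have "exps (mon ys) = map (mon ys) [0..<length ys]" unfolding exps_def s
    by (simp only: sorted_list_of_set_range)
  also have "\<dots> = ys" by (rule nth_equalityI) (auto simp: mon_def)
  finally have "exps (mon ys) = ys" .
  thus ?thesis using s by (auto simp: Mqs_def)
qed
lemma psum_Suc: "k < length xs \<Longrightarrow> sum_list (take (Suc k) xs) = sum_list (take k xs) + xs ! k"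
  by (simp add: take_Suc_conv_app_nth)

lemma psum_strict: assumes "\<forall>a\<in>set xs. 0 < (a::nat)" "j < k" "k \<le> length xs"
  shows "sum_list (take j xs) < sum_list (take k xs)"
  using assms(2,3)
proof (induction k)
  case 0 then show ?case by simp
next
  case (Suc k)
  have "0 < xs ! k" using assms(1) Suc.prems by auto
  have e: "sum_list (take (Suc k) xs) = sum_list (take k xs) + xs ! k"
    using Suc.prems by (intro psum_Suc) simp
  show ?case
  proof (cases "j = k")
    case True then show ?thesis using e \<open>0 < xs ! k\<close> by simp
  next
    case False
    hence "sum_list (take j xs) < sum_list (take k xs)" using Suc.prems by (intro Suc.IH) auto
    then show ?thesis using e by linarith
  qed
qed

lemma psum_less_iff: assumes "\<forall>a\<in>set xs. 0 < (a::nat)" "j \<le> length xs" "k \<le> length xs"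
  shows "sum_list (take j xs) < sum_list (take k xs) \<longleftrightarrow> j < k"
proof
  assume h: "sum_list (take j xs) < sum_list (take k xs)"
  show "j < k"
  proof (rule ccontr)
    assume "\<not> j < k"
    hence "k < j \<or> k = j" by linarith
    thus False
    proof
      assume "k < j" thus False using psum_strict[OF assms(1), of k j] assms h by linarith
    qed (use h in simp)
  qed
next
  assume "j < k" thus "sum_list (take j xs) < sum_list (take k xs)" using psum_strict[OF assms(1)] assms by blast
qed

lemma psum_le_iff: assumes "\<forall>a\<in>set xs. 0 < (a::nat)" "j \<le> length xs" "k \<le> length xs"
  shows "sum_list (take j xs) \<le> sum_list (take k xs) \<longleftrightarrow> j \<le> k"
  using psum_less_iff[OF assms(1) assms(3,2)] by linarith

lemma block_self: assumes "\<forall>a\<in>set xs. 0 < (a::nat)" "j < length xs"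
  shows "block xs xs j = {j}"
  using assms unfolding block_def
  by (auto simp: psum_less_iff[OF assms(1)] psum_le_iff[OF assms(1)])

lemma coef_self: assumes "\<forall>a\<in>set xs. 0 < (a::nat)" shows "coef xs xs = 1"
proof -
  have "\<And>j. j < length xs \<Longrightarrow> Ocount xs xs j \<le> 1 \<and> Ecount xs xs j \<le> 1"
  proof -
    fix j assume "j < length xs"
    hence b: "block xs xs j = {j}" by (rule block_self[OF assms])
    have "{k \<in> {j}. odd (xs ! k)} \<subseteq> {j}" "{k \<in> {j}. even (xs ! k)} \<subseteq> {j}" by auto
    hence "card {k \<in> {j}. odd (xs ! k)} \<le> card {j}" "card {k \<in> {j}. even (xs ! k)} \<le> card {j}"
      by (intro card_mono; simp)+
    hence "card {k \<in> {j}. odd (xs ! k)} \<le> 1" "card {k \<in> {j}. even (xs ! k)} \<le> 1" by simp_all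
    thus "Ocount xs xs j \<le> 1 \<and> Ecount xs xs j \<le> 1" by (simp add: Ocount_def Ecount_def b)
  qed
  moreover have "m \<le> 1 \<Longrightarrow> fact m = (1::nat)" for m by (cases m) auto
  ultimately show ?thesis unfolding coef_def by (intro prod.neutral) auto
qed




lemma psum_map2: assumes "sorted (L::nat list)" "k < length L"
  shows "sum_list (take k (map2 (\<lambda>a b. b - a) L (tl L))) = L ! k - L ! 0"
  using assms(2)
proof (induction k)
  case 0 then show ?case by simp
next
  case (Suc k)
  have len: "length (map2 (\<lambda>a b. b - a) L (tl L)) = length L - 1" by simp
  have nk: "map2 (\<lambda>a b. b - a) L (tl L) ! k = L ! Suc k - L ! k"
    using Suc.prems by (simp add: nth_tl)
  have "sum_list (take (Suc k) (map2 (\<lambda>a b. b - a) L (tl L)))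
        = sum_list (take k (map2 (\<lambda>a b. b - a) L (tl L))) + (L ! Suc k - L ! k)"
    using Suc.prems by (subst psum_Suc) (simp_all add: nk)
  also have "\<dots> = (L ! k - L ! 0) + (L ! Suc k - L ! k)" using Suc by simp
  also have "\<dots> = L ! Suc k - L ! 0"
  proof -
    have "L ! 0 \<le> L ! k" "L ! k \<le> L ! Suc k" using assms(1) Suc.prems
      by (auto intro: sorted_nth_mono)
    thus ?thesis by linarith
  qed
  finally show ?case .
qed

lemma Iset_comp_of_set: assumes "finite D" "D \<subseteq> {..n}"
  shows "Iset (comp_of_set n D) \<subseteq> D"
proof
  define L where "L = sorted_list_of_set (insert 0 (insert n D))"
  have cs: "comp_of_set n D = map2 (\<lambda>a b. b - a) L (tl L)" by (simp add: comp_of_set_def L_def Let_def)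
  have sL: "sorted_wrt (<) L" unfolding L_def by (rule sorted_list_of_set.strict_sorted_key_list_of_set)
  have sL': "sorted L" unfolding L_def by simp
  have setL: "set L = insert 0 (insert n D)" unfolding L_def by (rule set_sorted_list_of_set) (simp add: assms)
  fix x assume "x \<in> Iset (comp_of_set n D)"
  then obtain k where k: "x = sum_list (take k (comp_of_set n D))" "0 < k" "k < length L - 1"
    by (auto simp: Iset_def cs)
  have xk: "x = L ! k - L ! 0" using k psum_map2[OF sL', of k] cs by simp
  obtain j0 where j0: "j0 < length L" "L ! j0 = 0" using setL by (metis in_set_conv_nth insertI1)
  have "L ! 0 = 0"
  proof (cases j0)
    case (Suc j) thus ?thesis using j0 sL by (metis less_nat_zero_code sorted_wrt_nth_less zero_less_Suc)
  qed (use j0 in simp)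
  hence xk': "x = L ! k" using xk by simp
  have "L ! k \<in> set L" using k by simp
  moreover have "L ! k \<noteq> 0"
  proof -
    have "L ! 0 < L ! k" using sorted_wrt_nth_less[OF sL, of 0 k] k by auto
    thus ?thesis using \<open>L ! 0 = 0\<close> by simp
  qed
  moreover have "L ! k \<noteq> n"
  proof
    assume "L ! k = n"
    have "L ! (length L - 1) \<in> set L" using k by simp
    hence "L ! (length L - 1) \<le> n" using setL assms(2) by auto
    moreover have "L ! k < L ! (length L - 1)" using sorted_wrt_nth_less[OF sL, of k "length L - 1"] k by auto
    ultimately show False using \<open>L ! k = n\<close> by simp
  qed
  ultimately show "x \<in> D" using setL xk' by auto
qed

lemma odd_min_le: assumes "is_comp n xs" shows "comp_le (odd_min xs) xs"
proof -
  let ?D = "(\<lambda>i. sum_list (take (Suc i) xs)) ` OtE xs"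
  have fin: "finite ?D" by (rule finite_imageI) (rule finite_subset[of _ "{..<length xs}"], auto simp: OtE_def)
  have sub: "?D \<subseteq> Iset xs" by (auto simp: OtE_def Iset_def)
  have "?D \<subseteq> {..n}" using assms
    by (auto simp: is_comp_def) (metis append_take_drop_id sum_list_append le_add1)
  hence "Iset (odd_min xs) \<subseteq> ?D" unfolding odd_min_def using assms fin
    by (intro Iset_comp_of_set) (auto simp: is_comp_def)
  thus ?thesis using sub by (auto simp: comp_le_def)
qed




definition SetS :: "nat list \<Rightarrow> nat list set" where
  "SetS a = {\<beta>. is_comp (sum_list a) \<beta> \<and> comp_le (odd_min a) \<beta> \<and> comp_le \<beta> a}"

lemma SetS_sub: "a \<in> comps n \<Longrightarrow> SetS a \<subseteq> comps n"
  by (auto simp: SetS_def comps_def is_comp_def)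

lemma SetS_fin: "a \<in> comps n \<Longrightarrow> finite (SetS a)"
  using SetS_sub finite_comps finite_subset by blast

lemma self_in: "a \<in> comps n \<Longrightarrow> a \<in> SetS a"
  using odd_min_le[of n a] by (auto simp: SetS_def comps_def is_comp_def comp_le_def)

lemma Sshuf_eq: "Sshuf a = (\<Sum>\<beta>\<in>SetS a. scaleF (coef a \<beta>) (Mqs \<beta>))"
  by (simp add: fun_eq_iff sum_fun_apply scaleF_def Sshuf_def SetS_def)

lemma Sshuf_mon: assumes "a \<in> comps n" "g \<in> comps n"
  shows "Sshuf a (mon g) = (if g \<in> SetS a then coef a g else 0)"
proof -
  have pg: "\<forall>x\<in>set g. 0 < x" using assms by (simp add: comps_def is_comp_def)
  have "Sshuf a (mon g) = (\<Sum>\<beta>\<in>SetS a. coef a \<beta> * Mqs \<beta> (mon g))"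
    by (simp add: Sshuf_eq sum_fun_apply scaleF_def)
  also have "\<dots> = (\<Sum>\<beta>\<in>SetS a. if \<beta> = g then coef a \<beta> else 0)"
    by (rule sum.cong) (simp_all add: Mqs_mon[OF pg])
  also have "\<dots> = (if g \<in> SetS a then coef a g else 0)"
    using SetS_fin[OF assms(1)] by (simp add: sum.delta')
  finally show ?thesis .
qed

lemma comps_pos: "a \<in> comps n \<Longrightarrow> \<forall>x\<in>set a. 0 < x" by (simp add: comps_def is_comp_def)

lemma Iset_fin: "finite (Iset a)" unfolding Iset_def
  by (rule finite_subset[of _ "(\<lambda>k. sum_list (take k a)) ` {..<length a}"]) auto

lemma strict_below: assumes "a \<in> comps n" "b \<in> SetS a" "b \<noteq> a"
  shows "card (Iset b) < card (Iset a)" "b \<in> comps n"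
proof -
  show bc: "b \<in> comps n" using SetS_sub[OF assms(1)] assms(2) by blast
  have "Iset b \<subseteq> Iset a" using assms(2) by (simp add: SetS_def comp_le_def)
  moreover have "Iset b \<noteq> Iset a" using Iset_inj[of n b a] assms bc by (auto simp: comps_def)
  ultimately show "card (Iset b) < card (Iset a)" by (simp add: psubset_card_mono Iset_fin)
qed

lemma Mqs_in_span: "a \<in> comps n \<Longrightarrow> Mqs a \<in> F.span (Sshuf ` comps n)"
proof (induction "card (Iset a)" arbitrary: a rule: less_induct)
  case less
  have fin: "finite (SetS a)" using SetS_fin[OF less.prems] .
  have "Sshuf a = scaleF (coef a a) (Mqs a) + (\<Sum>\<beta>\<in>SetS a - {a}. scaleF (coef a \<beta>) (Mqs \<beta>))"
    unfolding Sshuf_eq using fin self_in[OF less.prems] by (simp add: sum.remove)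
  hence "Mqs a = Sshuf a - (\<Sum>\<beta>\<in>SetS a - {a}. scaleF (coef a \<beta>) (Mqs \<beta>))"
    using coef_self[OF comps_pos[OF less.prems]] by simp
  also have "\<dots> \<in> F.span (Sshuf ` comps n)"
  proof (intro F.span_diff F.span_sum F.span_scale)
    show "Sshuf a \<in> F.span (Sshuf ` comps n)" using less.prems by (intro F.span_base) auto
    fix b assume "b \<in> SetS a - {a}"
    thus "Mqs b \<in> F.span (Sshuf ` comps n)"
      using strict_below[OF less.prems, of b] less.hyps by auto
  qed
  finally show ?case .
qed

lemma span_part: "F.span (Sshuf ` comps n) = QSym n"
  unfolding QSym_def F.span_eq
proof
  show "Sshuf ` comps n \<subseteq> F.span (Mqs ` comps n)"
  proof
    fix x assume "x \<in> Sshuf ` comps n"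
    then obtain a where a: "a \<in> comps n" "x = Sshuf a" by blast
    show "x \<in> F.span (Mqs ` comps n)" unfolding a(2) Sshuf_eq
      using SetS_sub[OF a(1)] by (intro F.span_sum F.span_scale F.span_base) auto
  qed
  show "Mqs ` comps n \<subseteq> F.span (Sshuf ` comps n)" using Mqs_in_span by blast
qed

lemma indep_part: "\<not> F.dependent (Sshuf ` comps n)"
proof
  assume "F.dependent (Sshuf ` comps n)"
  then obtain t u where t: "finite t" "t \<subseteq> Sshuf ` comps n" "(\<Sum>v\<in>t. scaleF (u v) v) = 0"
    and ex: "\<exists>v\<in>t. u v \<noteq> 0" unfolding F.dependent_explicit by blast
  define A where "A = {a \<in> comps n. Sshuf a \<in> t \<and> u (Sshuf a) \<noteq> 0}"
  have finA: "finite A" using finite_comps by (simp add: A_def)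
  have neA: "A \<noteq> {}" using ex t(2) by (auto simp: A_def)
  obtain a where aA: "a \<in> A" and amax: "\<And>b. b \<in> A \<Longrightarrow> card (Iset b) \<le> card (Iset a)"
  proof -
    let ?M = "Max ((\<lambda>b. card (Iset b)) ` A)"
    have "?M \<in> (\<lambda>b. card (Iset b)) ` A" using finA neA by (intro Max_in) auto
    then obtain a where "a \<in> A" "card (Iset a) = ?M" by auto
    moreover have "\<And>b. b \<in> A \<Longrightarrow> card (Iset b) \<le> ?M" using finA by (intro Max_ge) auto
    ultimately show ?thesis using that by metis
  qed
  have ac: "a \<in> comps n" and at: "Sshuf a \<in> t" and au: "u (Sshuf a) \<noteq> 0" using aA by (auto simp: A_def)
  have "0 = (\<Sum>v\<in>t. scaleF (u v) v) (mon a)" using t(3) by simp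
  also have "\<dots> = (\<Sum>v\<in>t. u v * v (mon a))" by (simp add: sum_fun_apply scaleF_def)
  also have "\<dots> = u (Sshuf a) * Sshuf a (mon a) + (\<Sum>v\<in>t - {Sshuf a}. u v * v (mon a))"
    using t(1) at by (simp add: sum.remove)
  also have "(\<Sum>v\<in>t - {Sshuf a}. u v * v (mon a)) = 0"
  proof (rule sum.neutral, rule ballI)
    fix v assume v: "v \<in> t - {Sshuf a}"
    then obtain d where d: "d \<in> comps n" "v = Sshuf d" using t(2) by blast
    show "u v * v (mon a) = 0"
    proof (cases "u v = 0")
      case False
      hence dA: "d \<in> A" using d v by (auto simp: A_def)
      have "a \<notin> SetS d"
      proof
        assume "a \<in> SetS d"
        moreover have "a \<noteq> d" using v d by auto
        ultimately have "card (Iset a) < card (Iset d)" using strict_below[OF d(1), of a] by auto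
        thus False using amax[OF dA] by simp
      qed
      thus ?thesis using Sshuf_mon[OF d(1) ac] d by simp
    qed simp
  qed
  also have "Sshuf a (mon a) = 1" using Sshuf_mon[OF ac ac] self_in[OF ac] coef_self[OF comps_pos[OF ac]] by simp
  finally show False using au by simp
qed

theorem mainTheorem1:
  fixes n :: nat
  assumes "0 < n"
  shows "\<not> module.dependent scaleF (Sshuf ` comps n)
         \<and> module.span scaleF (Sshuf ` comps n) = QSym n"
  using indep_part span_part by blast


end
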